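(* Let $C\subseteq\mathbb F_2^n$ be a classical linear code with dual code $C^\perp$, and let $\Gamma\subseteq 2^{[n]}$ be a set of channel supports. Let $\hat\Gamma=\{a\neq\emptyset: a\subseteq\gamma \text{ for some }\gamma\in\Gamma\}$ and let $D$ be the $|C^\perp\setminus\{0\}|\times|\hat\Gamma|$ real matrix with rows indexed by $s\in C^\perp\setminus\{0\}$, columns indexed by $a\in\hat\Gamma$, and entries $D[s,a]=1$ if $a\subseteq s$ and $D[s,a]=0$ otherwise. Then $D$ has full rank (rank equal to $|\hat\Gamma|$) if and only if $\gamma_1\cup\gamma_2\in\Delta^{D}$ for all $\gamma_1,\gamma_2\in\Gamma$.
   Context: A classical code $C$ is a subspace of $\mathbb F_2^n$ with parity check matrix $H$ whose rows span $C^\perp=\{a\in\mathbb F_2^n: a\cdot c=0\ \forall c\in C\}$; the syndrome of $e\in\mathbb F_2^n$ is $\mathrm{syn}(e)=He$. Vectors in $\mathbb F_2^n$ are identified with their support sets in $[n]$ (so $a\subseteq s$ means $\mathrm{supp}(a)\subseteq\mathrm{supp}(s)$). Define $\Delta^{D}=\{\gamma\subseteq[n]: \mathrm{syn}(e)\neq0 \text{ for all nonzero } e \text{ with } \mathrm{supp}(e)\subseteq\gamma\}$. *)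

theory Defs
  imports Main "Jordan_Normal_Form.DL_Rank"
begin

text \<open>Vectors of F_2^n are identified with their supports, i.e. subsets of {..<n}.
  Addition is symmetric difference, the standard inner product a.b is the parity
  of card (a \<inter> b).\<close>

definition f2_add :: "nat set \<Rightarrow> nat set \<Rightarrow> nat set" where
  "f2_add x y = (x - y) \<union> (y - x)"

definition f2_dot_odd :: "nat set \<Rightarrow> nat set \<Rightarrow> bool" where
  "f2_dot_odd a b = odd (card (a \<inter> b))"

definition linear_code :: "nat \<Rightarrow> nat set set \<Rightarrow> bool" where
  "linear_code n C \<longleftrightarrow> C \<subseteq> Pow {..<n} \<and> {} \<in> C \<and> (\<forall>x\<in>C. \<forall>y\<in>C. f2_add x y \<in> C)"

definition dual_code :: "nat \<Rightarrow> nat set set \<Rightarrow> nat set set" where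
  "dual_code n C = {a \<in> Pow {..<n}. \<forall>c\<in>C. \<not> f2_dot_odd a c}"

definition f2_sum :: "nat set set \<Rightarrow> nat set" where
  "f2_sum T = {i. odd (card {t \<in> T. i \<in> t})}"

definition f2_span :: "nat set set \<Rightarrow> nat set set" where
  "f2_span S = {f2_sum T | T. T \<subseteq> S \<and> finite T}"

text \<open>Syndrome w.r.t. a parity check matrix H given by its list of rows;
  the syndrome He is the list of inner products of e with the rows.\<close>
definition syn :: "nat set list \<Rightarrow> nat set \<Rightarrow> bool list" where
  "syn H e = map (\<lambda>h. f2_dot_odd h e) H"

definition is_parity_check :: "nat \<Rightarrow> nat set set \<Rightarrow> nat set list \<Rightarrow> bool" where
  "is_parity_check n C H \<longleftrightarrow> set H \<subseteq> Pow {..<n} \<and> f2_span (set H) = dual_code n C"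

definition DeltaD :: "nat \<Rightarrow> nat set list \<Rightarrow> nat set set" where
  "DeltaD n H = {\<gamma>. \<gamma> \<subseteq> {..<n} \<and>
      (\<forall>e. e \<noteq> {} \<and> e \<subseteq> \<gamma> \<longrightarrow> syn H e \<noteq> replicate (length H) False)}"

definition Gamma_hat :: "nat set set \<Rightarrow> nat set set" where
  "Gamma_hat \<Gamma> = {a. a \<noteq> {} \<and> (\<exists>\<gamma>\<in>\<Gamma>. a \<subseteq> \<gamma>)}"

text \<open>A fixed enumeration (without repetitions) of a finite set; used to index
  rows and columns of a matrix. The rank does not depend on this choice.\<close>
definition enum_set :: "'a set \<Rightarrow> 'a list" where
  "enum_set S = (SOME xs. set xs = S \<and> distinct xs)"

definition D_matrix :: "nat \<Rightarrow> nat set set \<Rightarrow> nat set set \<Rightarrow> real mat" where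
  "D_matrix n C \<Gamma> =
     (let rs = enum_set (dual_code n C - {{}}); cs = enum_set (Gamma_hat \<Gamma>)
      in mat (length rs) (length cs) (\<lambda>(i, j). if cs ! j \<subseteq> rs ! i then 1 else 0))"

definition real_mat_rank :: "real mat \<Rightarrow> nat" where
  "real_mat_rank A = vec_space.rank (dim_row A) A"

end

theory Submission
  imports Defs
begin


lemma rank_full_iff:
  fixes A :: "real mat"
  assumes A: "A \<in> carrier_mat nr nc"
  shows "vec_space.rank nr A = nc \<longleftrightarrow> (\<forall>v\<in>carrier_vec nc. A *\<^sub>v v = 0\<^sub>v nr \<longrightarrow> v = 0\<^sub>v nc)"
proof -
  interpret vec_space "TYPE(real)" nr .
  show ?thesis
proof
  assume r: "vec_space.rank nr A = nc"
  have dist: "distinct (cols A)"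
  proof (rule ccontr)
    assume nd: "\<not> distinct (cols A)"
    obtain S where S: "maximal S (\<lambda>T. T \<subseteq> set (cols A) \<and> lin_indpt T)"
      using maximal_exists[of "(\<lambda>T. T \<subseteq> set (cols A) \<and> lin_indpt T)" "card (set (cols A))" "{}"]
      by (meson List.finite_set card_mono empty_iff empty_subsetI finite_lin_indpt2 rev_finite_subset)
    then have "card S \<le> card (set (cols A))" by (simp add: card_mono maximal_def)
    also have "\<dots> < nc" using nd A card_distinct[of "cols A"] card_length[of "cols A"] by fastforce
    finally show False using rank_card_indpt[OF A S] r by simp
  qed
  show "\<forall>v\<in>carrier_vec nc. A *\<^sub>v v = 0\<^sub>v nr \<longrightarrow> v = 0\<^sub>v nc"
  proof (intro ballI impI, rule ccontr)
    fix v assume v: "v \<in> carrier_vec nc" "A *\<^sub>v v = 0\<^sub>v nr" "v \<noteq> 0\<^sub>v nc"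
    have "lin_dep (set (cols A))"
      using lin_depI[OF A v(1) v(3) v(2) dist] .
    moreover have "lin_indpt (set (cols A))"
      using full_rank_lin_indpt[OF A r dist] .
    ultimately show False by simp
  qed
next
  assume ker: "\<forall>v\<in>carrier_vec nc. A *\<^sub>v v = 0\<^sub>v nr \<longrightarrow> v = 0\<^sub>v nc"
  have dist: "distinct (cols A)"
  proof (rule ccontr)
    assume "\<not> distinct (cols A)"
    then obtain i j where ij: "i < nc" "j < nc" "i \<noteq> j" "cols A ! i = cols A ! j"
      using A by (auto simp: distinct_conv_nth)
    define v :: "real vec" where "v = vec nc (\<lambda>k. if k = i then 1 else if k = j then -1 else 0)"
    have vc: "v \<in> carrier_vec nc" by (simp add: v_def)
    have "A *\<^sub>v v = 0\<^sub>v nr"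
    proof (rule eq_vecI)
      fix r assume "r < dim_vec (0\<^sub>v nr :: real vec)"
      then have r: "r < nr" by simp
      have cij: "A $$ (r, i) = A $$ (r, j)" using ij A r
        by (metis carrier_matD(1) carrier_matD(2) cols_length cols_nth index_col)
      have "(A *\<^sub>v v) $ r = (\<Sum>k<nc. A $$ (r, k) * v $ k)"
        using A r by (simp add: mult_mat_vec_def scalar_prod_def v_def lessThan_atLeast0)
      also have "\<dots> = (\<Sum>k<nc. (if k = i then A $$ (r, i) else 0) - (if k = j then A $$ (r, j) else 0))"
        by (rule sum.cong) (use ij in \<open>auto simp: v_def\<close>)
      also have "\<dots> = 0" using ij cij by (simp add: sum_subtractf)
      finally show "(A *\<^sub>v v) $ r = 0\<^sub>v nr $ r" using r by simp
    qed (use A in simp)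
    moreover have "v \<noteq> 0\<^sub>v nc"
    proof
      assume "v = 0\<^sub>v nc"
      then have "v $ i = 0" using ij by simp
      then show False using ij by (simp add: v_def)
    qed
    ultimately show False using ker vc by blast
  qed
  have "lin_indpt (set (cols A))"
  proof
    assume "lin_dep (set (cols A))"
    then obtain v where "v \<in> carrier_vec nc" "v \<noteq> 0\<^sub>v nc" "A *\<^sub>v v = 0\<^sub>v nr"
      using lin_depE[OF A _ dist] by blast
    then show False using ker by blast
  qed
  then show "vec_space.rank nr A = nc" using lin_indpt_full_rank[OF A dist] by blast
qed
qed



lemma neg1_pow_eq_1: "((-1::real)^k = 1) \<longleftrightarrow> even k"
  by (cases "even k") auto

lemma neg1_sq: "(-1::real)^k * (-1)^k = 1"
  by (simp flip: power_add) 

lemma sign_add: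
  assumes "finite (t \<inter> x)" "finite (t \<inter> y)"
  shows "(-1::real)^card (t \<inter> f2_add x y) = (-1)^card (t \<inter> x) * (-1)^card (t \<inter> y)"
proof -
  have fx: "finite (t \<inter> x \<inter> y)" "finite (t \<inter> (x - y))" "finite (t \<inter> (y - x))"
    using assms by (auto intro: finite_subset)
  have e1: "card (t \<inter> x) = card (t \<inter> x \<inter> y) + card (t \<inter> (x - y))"
  proof -
    have "t \<inter> x = (t \<inter> x \<inter> y) \<union> (t \<inter> (x - y))" by blast
    moreover have "(t \<inter> x \<inter> y) \<inter> (t \<inter> (x - y)) = {}" by blast
    ultimately show ?thesis using fx by (metis card_Un_disjoint)
  qed
  have e2: "card (t \<inter> y) = card (t \<inter> x \<inter> y) + card (t \<inter> (y - x))"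
  proof -
    have "t \<inter> y = (t \<inter> x \<inter> y) \<union> (t \<inter> (y - x))" by blast
    moreover have "(t \<inter> x \<inter> y) \<inter> (t \<inter> (y - x)) = {}" by blast
    ultimately show ?thesis using fx by (metis card_Un_disjoint)
  qed
  have e3: "card (t \<inter> f2_add x y) = card (t \<inter> (x - y)) + card (t \<inter> (y - x))"
  proof -
    have "t \<inter> f2_add x y = (t \<inter> (x - y)) \<union> (t \<inter> (y - x))" by (auto simp: f2_add_def)
    moreover have "(t \<inter> (x - y)) \<inter> (t \<inter> (y - x)) = {}" by blast
    ultimately show ?thesis using fx by (metis card_Un_disjoint)
  qed
  show ?thesis unfolding e1 e2 e3 power_add
    using neg1_sq[of "card (t \<inter> x \<inter> y)"] by (simp add: algebra_simps)
qed

lemma sign_add':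
  assumes "finite x" "finite y"
  shows "(-1::real)^card (f2_add x y \<inter> s) = (-1)^card (x \<inter> s) * (-1)^card (y \<inter> s)"
  using sign_add[of s x y] assms by (simp add: Int_commute)

lemma f2_add_self: "f2_add x x = {}" by (simp add: f2_add_def)

lemma f2_add_inv: "f2_add a (f2_add a s) = s" by (auto simp: f2_add_def)

lemma f2_sum_empty: "f2_sum {} = {}" by (simp add: f2_sum_def)

lemma f2_sum_insert:
  assumes "t \<notin> T" "finite T"
  shows "f2_sum (insert t T) = f2_add t (f2_sum T)"
proof -
  have "i \<in> f2_sum (insert t T) \<longleftrightarrow> i \<in> f2_add t (f2_sum T)" for i
  proof (cases "i \<in> t")
    case True
    then have "{u \<in> insert t T. i \<in> u} = insert t {u \<in> T. i \<in> u}" by auto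
    then have "card {u \<in> insert t T. i \<in> u} = Suc (card {u \<in> T. i \<in> u})"
      using assms by simp
    then show ?thesis using True by (auto simp: f2_sum_def f2_add_def)
  next
    case False
    then have "{u \<in> insert t T. i \<in> u} = {u \<in> T. i \<in> u}" by auto
    then show ?thesis using False by (auto simp: f2_sum_def f2_add_def)
  qed
  then show ?thesis by blast
qed

lemma f2_sum_single: "f2_sum {h} = h"
proof -
  have "{t. t = h \<and> x \<in> t} = (if x \<in> h then {h} else {})" for x by auto
  then show ?thesis by (auto simp: f2_sum_def)
qed

lemma sign_f2_sum:
  assumes "finite T" "finite e"
  shows "(-1::real)^card (e \<inter> f2_sum T) = (\<Prod>t\<in>T. (-1)^card (e \<inter> t))"
  using assms(1)
proof (induction T rule: finite_induct)
  case empty then show ?case by (simp add: f2_sum_empty)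
next
  case (insert t T)
  then show ?case using sign_add[of e t "f2_sum T"] assms(2) by (simp add: f2_sum_insert)
qed


lemma syn_zero_iff:
  assumes "is_parity_check n C H" "finite e"
  shows "syn H e = replicate (length H) False \<longleftrightarrow> (\<forall>s\<in>dual_code n C. even (card (e \<inter> s)))"
proof -
  have "syn H e = replicate (length H) False \<longleftrightarrow> (\<forall>h\<in>set H. even (card (h \<inter> e)))"
    unfolding syn_def f2_dot_odd_def by (induction H) auto
  also have "\<dots> \<longleftrightarrow> (\<forall>s\<in>dual_code n C. even (card (e \<inter> s)))"
  proof
    assume h: "\<forall>h\<in>set H. even (card (h \<inter> e))"
    show "\<forall>s\<in>dual_code n C. even (card (e \<inter> s))"
    proof
      fix s assume "s \<in> dual_code n C"
      then have "s \<in> f2_span (set H)" using assms(1) by (simp add: is_parity_check_def)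
      then obtain T where T: "s = f2_sum T" "T \<subseteq> set H" "finite T" by (auto simp: f2_span_def)
      have "(-1::real)^card (e \<inter> s) = (\<Prod>t\<in>T. (-1)^card (e \<inter> t))"
        using sign_f2_sum[OF T(3) assms(2)] T(1) by simp
      also have "\<dots> = 1"
        by (rule prod.neutral) (use h T(2) in \<open>auto simp: neg1_pow_eq_1 Int_commute\<close>)
      finally show "even (card (e \<inter> s))" by (simp add: neg1_pow_eq_1)
    qed
  next
    assume d: "\<forall>s\<in>dual_code n C. even (card (e \<inter> s))"
    show "\<forall>h\<in>set H. even (card (h \<inter> e))"
    proof
      fix h assume "h \<in> set H"
      then have "f2_sum {h} \<in> f2_span (set H)" unfolding f2_span_def by blast
      then have "h \<in> dual_code n C" using assms(1) by (simp add: is_parity_check_def f2_sum_single)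
      then show "even (card (h \<inter> e))" using d by (metis Int_commute)
    qed
  qed
  finally show ?thesis .
qed


lemma dual_finite: "finite (dual_code n C)"
proof -
  have "dual_code n C \<subseteq> Pow {..<n}" by (auto simp: dual_code_def)
  then show ?thesis by (rule finite_subset) simp
qed

lemma dual_empty: "{} \<in> dual_code n C"
  unfolding dual_code_def f2_dot_odd_def by auto

lemma dual_sub: "s \<in> dual_code n C \<Longrightarrow> s \<subseteq> {..<n}"
  unfolding dual_code_def by auto

lemma dual_add:
  assumes "x \<in> dual_code n C" "y \<in> dual_code n C"
  shows "f2_add x y \<in> dual_code n C"
proof -
  have fx: "finite x" "finite y" using assms dual_sub finite_subset[OF _ finite_lessThan] by metis+
  have "f2_add x y \<subseteq> {..<n}" using assms dual_sub by (auto simp: f2_add_def)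
  moreover have "\<not> f2_dot_odd (f2_add x y) c" if "c \<in> C" for c
  proof -
    have "even (card (x \<inter> c))" "even (card (y \<inter> c))"
      using assms that by (auto simp: dual_code_def f2_dot_odd_def)
    then have "(-1::real)^card (f2_add x y \<inter> c) = 1"
      using sign_add'[OF fx, of c] by (simp add: neg1_pow_eq_1)
    then show ?thesis by (simp add: f2_dot_odd_def neg1_pow_eq_1)
  qed
  ultimately show ?thesis by (auto simp: dual_code_def)
qed

lemma orth:
  assumes "finite t"
  shows "(\<Sum>s\<in>dual_code n C. (-1::real)^card (t \<inter> s)) =
    (if \<forall>s\<in>dual_code n C. even (card (t \<inter> s)) then real (card (dual_code n C)) else 0)"
proof (cases "\<forall>s\<in>dual_code n C. even (card (t \<inter> s))")
  case True
  then show ?thesis by (simp add: neg1_pow_eq_1)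
next
  case False
  then obtain s0 where s0: "s0 \<in> dual_code n C" "odd (card (t \<inter> s0))" by blast
  let ?D = "dual_code n C"
  have fs0: "finite s0" using s0 dual_sub finite_subset[OF _ finite_lessThan] by metis
  have inj: "inj_on (f2_add s0) ?D" by (rule inj_onI) (metis f2_add_inv)
  have img: "f2_add s0 ` ?D = ?D"
  proof
    show "f2_add s0 ` ?D \<subseteq> ?D" using dual_add s0 by blast
    show "?D \<subseteq> f2_add s0 ` ?D"
    proof
      fix s assume "s \<in> ?D"
      then have "f2_add s0 s \<in> ?D" using dual_add s0(1) by blast
      then show "s \<in> f2_add s0 ` ?D" using f2_add_inv[of s0 s] by (metis image_eqI)
    qed
  qed
  have "(\<Sum>s\<in>?D. (-1::real)^card (t \<inter> s)) = (\<Sum>s\<in>?D. (-1::real)^card (t \<inter> f2_add s0 s))"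
    using sum.reindex[OF inj, of "\<lambda>s. (-1::real)^card (t \<inter> s)"] img by simp
  also have "\<dots> = (\<Sum>s\<in>?D. uminus ((-1::real)^card (t \<inter> s)))"
  proof (rule sum.cong)
    fix s assume "s \<in> ?D"
    then have "finite s" using dual_sub finite_subset[OF _ finite_lessThan] by metis
    have m: "(-1::real)^card (t \<inter> s0) = -1" using s0(2) by simp
    have "(-1::real)^card (t \<inter> f2_add s0 s) = (-1)^card (t \<inter> s0) * (-1)^card (t \<inter> s)"
      by (rule sign_add) (use assms in auto)
    then show "(-1::real)^card (t \<inter> f2_add s0 s) = uminus ((-1::real)^card (t \<inter> s))"
      using m by simp
  qed simp
  finally have "(\<Sum>s\<in>?D. (-1::real)^card (t \<inter> s)) = - (\<Sum>s\<in>?D. (-1::real)^card (t \<inter> s))"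
    by (simp only: sum_negf)
  then have "(\<Sum>s\<in>?D. (-1::real)^card (t \<inter> s)) = 0" by linarith
  then show ?thesis by (subst if_not_P[OF False])
qed



lemma expand1:
  assumes "finite a"
  shows "(\<Sum>b\<in>Pow a. (-2::real)^card b * (if b \<subseteq> s then 1 else 0)) = (-1)^card (a \<inter> s)"
  using assms
proof (induction a rule: finite_induct)
  case empty then show ?case by simp
next
  case (insert x a)
  have disj: "Pow a \<inter> insert x ` Pow a = {}" using insert by auto
  have inj: "inj_on (insert x) (Pow a)"
  proof (rule inj_onI)
    fix b c assume "b \<in> Pow a" "c \<in> Pow a" "insert x b = insert x c"
    moreover have "x \<notin> b" "x \<notin> c" using insert.hyps(2) calculation by auto
    ultimately show "b = c" by (metis Diff_insert_absorb)
  qed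
  have "(\<Sum>b\<in>Pow (insert x a). (-2::real)^card b * (if b \<subseteq> s then 1 else 0)) =
     (\<Sum>b\<in>Pow a. (-2::real)^card b * (if b \<subseteq> s then 1 else 0)) +
     (\<Sum>b\<in>Pow a. (-2::real)^card (insert x b) * (if insert x b \<subseteq> s then 1 else 0))"
    unfolding Pow_insert using insert disj inj by (simp add: sum.union_disjoint sum.reindex)
  also have "(\<Sum>b\<in>Pow a. (-2::real)^card (insert x b) * (if insert x b \<subseteq> s then 1 else 0)) =
      (\<Sum>b\<in>Pow a. (-2) * (if x \<in> s then 1 else 0) * ((-2::real)^card b * (if b \<subseteq> s then 1 else 0)))"
  proof (rule sum.cong)
    fix b assume "b \<in> Pow a"
    then have "finite b" "x \<notin> b" using insert finite_subset by auto
    then show "(-2::real)^card (insert x b) * (if insert x b \<subseteq> s then 1 else 0) =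
      (-2) * (if x \<in> s then 1 else 0) * ((-2::real)^card b * (if b \<subseteq> s then 1 else 0))" by simp
  qed simp
  also have "(\<Sum>b\<in>Pow a. (-2) * (if x \<in> s then 1 else 0) * ((-2::real)^card b * (if b \<subseteq> s then 1 else 0)))
     = (-2) * (if x \<in> s then 1 else 0) * (-1)^card (a \<inter> s)"
    by (simp only: sum_distrib_left[symmetric] insert.IH)
  also have "(\<Sum>b\<in>Pow a. (-2::real)^card b * (if b \<subseteq> s then 1 else 0)) = (-1)^card (a \<inter> s)"
    by (rule insert.IH)
  also have "(-1)^card (a \<inter> s) + (-2) * (if x \<in> s then 1 else 0) * (-1)^card (a \<inter> s) = (-1::real)^card (insert x a \<inter> s)"
    using insert by (cases "x \<in> s") auto
  finally show ?case .
qed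
lemma expand2:
  assumes "finite a"
  shows "(\<Sum>b\<in>Pow a. (-1::real)^card b * (-1)^card (b \<inter> s)) = 2^card a * (if a \<subseteq> s then 1 else 0)"
  using assms
proof (induction a rule: finite_induct)
  case empty then show ?case by simp
next
  case (insert x a)
  have disj: "Pow a \<inter> insert x ` Pow a = {}" using insert by auto
  have inj: "inj_on (insert x) (Pow a)"
  proof (rule inj_onI)
    fix b c assume "b \<in> Pow a" "c \<in> Pow a" "insert x b = insert x c"
    moreover have "x \<notin> b" "x \<notin> c" using insert.hyps(2) calculation by auto
    ultimately show "b = c" by (metis Diff_insert_absorb)
  qed
  have "(\<Sum>b\<in>Pow (insert x a). (-1::real)^card b * (-1)^card (b \<inter> s)) =
     (\<Sum>b\<in>Pow a. (-1::real)^card b * (-1)^card (b \<inter> s)) +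
     (\<Sum>b\<in>Pow a. (-1::real)^card (insert x b) * (-1)^card (insert x b \<inter> s))"
    unfolding Pow_insert using insert disj inj by (simp add: sum.union_disjoint sum.reindex)
  also have "(\<Sum>b\<in>Pow a. (-1::real)^card (insert x b) * (-1)^card (insert x b \<inter> s)) =
      (\<Sum>b\<in>Pow a. (if x \<in> s then 1 else -1) * ((-1::real)^card b * (-1)^card (b \<inter> s)))"
  proof (rule sum.cong)
    fix b assume "b \<in> Pow a"
    then have "finite b" "x \<notin> b" using insert finite_subset by auto
    then show "(-1::real)^card (insert x b) * (-1)^card (insert x b \<inter> s) =
      (if x \<in> s then 1 else -1) * ((-1::real)^card b * (-1)^card (b \<inter> s))" by auto
  qed simp
  also have "(\<Sum>b\<in>Pow a. (if x \<in> s then 1 else -1) * ((-1::real)^card b * (-1)^card (b \<inter> s)))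
     = (if x \<in> s then 1 else -1) * (2^card a * (if a \<subseteq> s then 1 else 0))"
    by (simp only: sum_distrib_left[symmetric] insert.IH)
  also have "(\<Sum>b\<in>Pow a. (-1::real)^card b * (-1)^card (b \<inter> s)) = 2^card a * (if a \<subseteq> s then 1 else 0)"
    by (rule insert.IH)
  also have "2^card a * (if a \<subseteq> s then 1 else 0) + (if x \<in> s then 1 else -1) * (2^card a * (if a \<subseteq> s then 1 else 0))
     = (2::real)^card (insert x a) * (if insert x a \<subseteq> s then 1 else 0)"
    using insert by (cases "x \<in> s") auto
  finally show ?case .
qed




lemma G_sub: "\<Gamma> \<subseteq> Pow {..<n} \<Longrightarrow> Gamma_hat \<Gamma> \<subseteq> Pow {..<n}"
  unfolding Gamma_hat_def by auto

lemma G_finite: "\<Gamma> \<subseteq> Pow {..<n} \<Longrightarrow> finite (Gamma_hat \<Gamma>)"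
  using G_sub by (metis finite_Pow_iff finite_lessThan finite_subset)

lemma G_elem_finite: "\<Gamma> \<subseteq> Pow {..<n} \<Longrightarrow> a \<in> Gamma_hat \<Gamma> \<Longrightarrow> finite a"
  using G_sub by (metis PowD finite_lessThan finite_subset subsetD)

lemma indep_of_cond:
  assumes \<Gamma>: "\<Gamma> \<subseteq> Pow {..<n}"
  and cond: "\<forall>\<gamma>1\<in>\<Gamma>. \<forall>\<gamma>2\<in>\<Gamma>. \<forall>e. e \<noteq> {} \<and> e \<subseteq> \<gamma>1 \<union> \<gamma>2 \<longrightarrow> \<not>(\<forall>s\<in>dual_code n C. even (card (e \<inter> s)))"
  and hf: "\<forall>s\<in>dual_code n C. (\<Sum>a\<in>Gamma_hat \<Gamma>. f a * (if a \<subseteq> s then 1 else 0)) = (0::real)"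
  shows "\<forall>a\<in>Gamma_hat \<Gamma>. f a = 0"
proof (rule ccontr)
  let ?D = "dual_code n C"
  let ?G = "Gamma_hat \<Gamma>"
  let ?P = "\<lambda>a s. (if a \<subseteq> s then 1 else 0 :: real)"
  assume "\<not> (\<forall>a\<in>?G. f a = 0)"
  define N where "N = {a\<in>?G. f a \<noteq> 0}"
  have finG: "finite ?G" using G_finite[OF \<Gamma>] .
  have N: "finite N" "N \<noteq> {}" using finG \<open>\<not> (\<forall>a\<in>?G. f a = 0)\<close> by (auto simp: N_def)
  have "Max (card ` N) \<in> card ` N" using N by simp
  then obtain a0 where a0N: "a0 \<in> N" and a0m: "card a0 = Max (card ` N)" by auto
  have a0max: "\<And>a. a \<in> N \<Longrightarrow> card a \<le> card a0" using N a0m by simp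
  have a0G: "a0 \<in> ?G" and fa0: "f a0 \<noteq> 0" using a0N by (auto simp: N_def)
  have finel: "\<And>a. a \<in> ?G \<Longrightarrow> finite a" using G_elem_finite[OF \<Gamma>] by blast
  have maxim: "f a = 0" if "a \<in> ?G" "a0 \<subseteq> a" "a \<noteq> a0" for a
  proof (rule ccontr)
    assume "f a \<noteq> 0"
    then have "a \<in> N" using that by (auto simp: N_def)
    then have "card a \<le> card a0" by (rule a0max)
    then have "a0 = a" using card_seteq[OF finel[OF that(1)] that(2)] by simp
    then show False using that by simp
  qed
  have key: "(\<forall>s\<in>?D. even (card (f2_add a0 b \<inter> s))) \<longleftrightarrow> b = a0" if aG': "a \<in> ?G" and ba: "b \<subseteq> a" for a b
  proof
    assume ev: "\<forall>s\<in>?D. even (card (f2_add a0 b \<inter> s))"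
    obtain \<gamma>0 where "\<gamma>0 \<in> \<Gamma>" "a0 \<subseteq> \<gamma>0" using a0G by (auto simp: Gamma_hat_def)
    moreover obtain \<gamma> where "\<gamma> \<in> \<Gamma>" "a \<subseteq> \<gamma>" using aG' by (auto simp: Gamma_hat_def)
    ultimately have "f2_add a0 b \<subseteq> \<gamma>0 \<union> \<gamma>" using ba by (auto simp: f2_add_def)
    then have "f2_add a0 b = {}" using cond \<open>\<gamma>0 \<in> \<Gamma>\<close> \<open>\<gamma> \<in> \<Gamma>\<close> ev by blast
    then show "b = a0" by (auto simp: f2_add_def)
  next
    assume "b = a0"
    then show "\<forall>s\<in>?D. even (card (f2_add a0 b \<inter> s))" by (simp add: f2_add_self)
  qed
  have inner: "(\<Sum>s\<in>?D. (-1::real)^card (a0 \<inter> s) * ?P a s) =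
      (if a0 \<subseteq> a then (-1)^card a0 * real (card ?D) / 2^card a else 0)" if aG: "a \<in> ?G" for a
  proof -
    have fa: "finite a" using finel[OF aG] .
    have fa0: "finite a0" using finel[OF a0G] .
    have "(\<Sum>s\<in>?D. (-1::real)^card (a0 \<inter> s) * ?P a s) =
        (\<Sum>s\<in>?D. (-1::real)^card (a0 \<inter> s) * ((1 / 2^card a) * (\<Sum>b\<in>Pow a. (-1::real)^card b * (-1)^card (b \<inter> s))))"
    proof (rule sum.cong)
      fix s
      show "(-1::real)^card (a0 \<inter> s) * ?P a s =
        (-1::real)^card (a0 \<inter> s) * ((1 / 2^card a) * (\<Sum>b\<in>Pow a. (-1::real)^card b * (-1)^card (b \<inter> s)))"
        using expand2[OF fa, of s] by simp
    qed simp
    also have "\<dots> = (1 / 2^card a) * (\<Sum>b\<in>Pow a. (-1::real)^card b * (\<Sum>s\<in>?D. (-1::real)^card (f2_add a0 b \<inter> s)))"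
    proof -
      have "(\<Sum>s\<in>?D. (-1::real)^card (a0 \<inter> s) * ((1 / 2^card a) * (\<Sum>b\<in>Pow a. (-1::real)^card b * (-1)^card (b \<inter> s))))
          = (1 / 2^card a) * (\<Sum>s\<in>?D. \<Sum>b\<in>Pow a. (-1::real)^card b * ((-1::real)^card (a0 \<inter> s) * (-1)^card (b \<inter> s)))"
        by (simp add: sum_distrib_left algebra_simps)
      also have "\<dots> = (1 / 2^card a) * (\<Sum>b\<in>Pow a. \<Sum>s\<in>?D. (-1::real)^card b * ((-1::real)^card (a0 \<inter> s) * (-1)^card (b \<inter> s)))"
        by (simp only: sum.swap[of _ ?D])
      also have "\<dots> = (1 / 2^card a) * (\<Sum>b\<in>Pow a. (-1::real)^card b * (\<Sum>s\<in>?D. (-1::real)^card (f2_add a0 b \<inter> s)))"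
      proof -
        have "(-1::real)^card (a0 \<inter> s) * (-1)^card (b \<inter> s) = (-1::real)^card (f2_add a0 b \<inter> s)"
          if "b \<in> Pow a" for b s
        proof -
          have "finite b" using that fa finite_subset by auto
          then show ?thesis using sign_add'[OF fa0, of b s] by simp
        qed
        then show ?thesis by (simp add: sum_distrib_left)
      qed
      finally show ?thesis .
    qed
    also have "\<dots> = (1 / 2^card a) * (\<Sum>b\<in>Pow a. (if b = a0 then (-1::real)^card a0 * real (card ?D) else 0))"
    proof -
      have "(-1::real)^card b * (\<Sum>s\<in>?D. (-1::real)^card (f2_add a0 b \<inter> s)) =
         (if b = a0 then (-1::real)^card a0 * real (card ?D) else 0)" if "b \<in> Pow a" for b
      proof -
        have fb: "finite (f2_add a0 b)" using fa0 fa that finite_subset by (auto simp: f2_add_def)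
        show ?thesis using orth[OF fb, of n C] key[OF aG, of b] that by auto
      qed
      then show ?thesis by simp
    qed
    also have "\<dots> = (if a0 \<subseteq> a then (-1)^card a0 * real (card ?D) / 2^card a else 0)"
      using fa by (simp add: sum.delta)
    finally show ?thesis .
  qed
  have "0 = (\<Sum>s\<in>?D. (-1::real)^card (a0 \<inter> s) * (\<Sum>a\<in>?G. f a * ?P a s))"
    using hf by simp
  also have "\<dots> = (\<Sum>a\<in>?G. f a * (\<Sum>s\<in>?D. (-1::real)^card (a0 \<inter> s) * ?P a s))"
    by (simp add: sum_distrib_left sum.swap[of _ ?D] algebra_simps)
  also have "\<dots> = (\<Sum>a\<in>?G. (if a = a0 then f a0 * ((-1)^card a0 * real (card ?D) / 2^card a0) else 0))"
  proof (rule sum.cong)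
    fix a assume aG: "a \<in> ?G"
    show "f a * (\<Sum>s\<in>?D. (-1::real)^card (a0 \<inter> s) * ?P a s) =
      (if a = a0 then f a0 * ((-1)^card a0 * real (card ?D) / 2^card a0) else 0)"
      using inner[OF aG] maxim[OF aG] by auto
  qed simp
  also have "\<dots> = f a0 * ((-1)^card a0 * real (card ?D) / 2^card a0)"
    using finG a0G by (simp add: sum.delta)
  finally have z: "f a0 * ((-1)^card a0 * real (card ?D) / 2^card a0) = 0" by simp
  have "card ?D \<noteq> 0" using dual_finite dual_empty by (metis card_0_eq empty_iff)
  then show False using z fa0 by simp
qed


lemma sum_sub_pow:
  fixes h :: "nat set \<Rightarrow> real"
  assumes \<Gamma>: "\<Gamma> \<subseteq> Pow {..<n}" and g: "\<gamma> \<in> \<Gamma>" "e' \<subseteq> \<gamma>"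
  shows "(\<Sum>a\<in>Gamma_hat \<Gamma>. (if a \<subseteq> e' then h a else 0)) = (\<Sum>a\<in>Pow e'. h a) - h {}"
proof -
  have fe: "finite e'" using assms by (meson PowD finite_lessThan finite_subset subsetD)
  have "{a \<in> Gamma_hat \<Gamma>. a \<subseteq> e'} = Pow e' - {{}}" using g by (auto simp: Gamma_hat_def)
  moreover have "(\<Sum>a\<in>Gamma_hat \<Gamma>. (if a \<subseteq> e' then h a else 0)) = (\<Sum>a\<in>{a \<in> Gamma_hat \<Gamma>. a \<subseteq> e'}. h a)"
    by (rule sum.inter_filter[symmetric]) (rule G_finite[OF \<Gamma>])
  ultimately have "(\<Sum>a\<in>Gamma_hat \<Gamma>. (if a \<subseteq> e' then h a else 0)) = (\<Sum>a\<in>Pow e' - {{}}. h a)"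
    by simp
  also have "\<dots> = (\<Sum>a\<in>Pow e'. h a) - h {}"
  proof -
    have "(\<Sum>a\<in>Pow e'. h a) = h {} + (\<Sum>a\<in>Pow e' - {{}}. h a)"
      by (rule sum.remove) (use fe in auto)
    then show ?thesis by simp
  qed
  finally show ?thesis .
qed

lemma dep_of_not_cond:
  assumes \<Gamma>: "\<Gamma> \<subseteq> Pow {..<n}" and g1: "\<gamma>1 \<in> \<Gamma>" and g2: "\<gamma>2 \<in> \<Gamma>"
    and ne: "e \<noteq> {}" and es: "e \<subseteq> \<gamma>1 \<union> \<gamma>2"
    and ce: "\<forall>s\<in>dual_code n C. even (card (e \<inter> s))"
  shows "\<exists>f. (\<forall>s\<in>dual_code n C. (\<Sum>a\<in>Gamma_hat \<Gamma>. f a * (if a \<subseteq> s then 1 else 0)) = (0::real))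
             \<and> (\<exists>a\<in>Gamma_hat \<Gamma>. f a \<noteq> 0)"
proof -
  let ?G = "Gamma_hat \<Gamma>"
  define e1 where "e1 = e \<inter> \<gamma>1"
  define e2 where "e2 = e - \<gamma>1"
  have e1s: "e1 \<subseteq> \<gamma>1" and e2s: "e2 \<subseteq> \<gamma>2" using es by (auto simp: e1_def e2_def)
  have fg1: "finite \<gamma>1" and fg2: "finite \<gamma>2" using \<Gamma> g1 g2 by (meson PowD finite_lessThan finite_subset subsetD)+
  have fe1: "finite e1" and fe2: "finite e2" using e1s e2s fg1 fg2 finite_subset by auto
  have eadd: "e = f2_add e1 e2" by (auto simp: e1_def e2_def f2_add_def)
  define f where "f a = (if a \<subseteq> e1 then (-2::real)^card a else 0) - (if a \<subseteq> e2 then (-2::real)^card a else 0)" for a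
  have zero: "(\<Sum>a\<in>?G. f a * (if a \<subseteq> s then 1 else 0)) = 0" if sD: "s \<in> dual_code n C" for s
  proof -
    let ?h = "\<lambda>a. (-2::real)^card a * (if a \<subseteq> s then 1 else 0)"
    have "(\<Sum>a\<in>?G. f a * (if a \<subseteq> s then 1 else 0)) =
        (\<Sum>a\<in>?G. (if a \<subseteq> e1 then ?h a else 0) - (if a \<subseteq> e2 then ?h a else 0))"
      by (rule sum.cong) (simp_all add: f_def algebra_simps)
    also have "\<dots> = (\<Sum>a\<in>?G. (if a \<subseteq> e1 then ?h a else 0)) - (\<Sum>a\<in>?G. (if a \<subseteq> e2 then ?h a else 0))"
      by (rule sum_subtractf)
    also have "\<dots> = ((\<Sum>a\<in>Pow e1. ?h a) - ?h {}) - ((\<Sum>a\<in>Pow e2. ?h a) - ?h {})"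
      using sum_sub_pow[OF \<Gamma> g1 e1s, of ?h] sum_sub_pow[OF \<Gamma> g2 e2s, of ?h] by simp
    also have "\<dots> = (-1)^card (e1 \<inter> s) - (-1)^card (e2 \<inter> s)"
      using expand1[OF fe1, of s] expand1[OF fe2, of s] by simp
    also have "\<dots> = 0"
    proof -
      have "(-1::real)^card (e \<inter> s) = 1" using ce sD by (simp add: neg1_pow_eq_1)
      then have xy: "(-1::real)^card (e1 \<inter> s) * (-1)^card (e2 \<inter> s) = 1"
        using sign_add'[OF fe1 fe2, of s] eadd by simp
      have "(-1::real)^card (e2 \<inter> s) = ((-1)^card (e1 \<inter> s) * (-1)^card (e1 \<inter> s)) * (-1)^card (e2 \<inter> s)"
        using neg1_sq by simp
      also have "\<dots> = (-1)^card (e1 \<inter> s) * ((-1)^card (e1 \<inter> s) * (-1)^card (e2 \<inter> s))"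
        by (rule mult.assoc)
      also have "\<dots> = (-1)^card (e1 \<inter> s)" by (simp only: xy mult_1_right)
      finally show ?thesis by simp
    qed
    finally show ?thesis .
  qed
  have "\<exists>a\<in>?G. f a \<noteq> 0"
  proof (cases "e1 = {}")
    case False
    have "e1 \<in> ?G" using False e1s g1 by (auto simp: Gamma_hat_def)
    moreover have "\<not> e1 \<subseteq> e2" using False unfolding e1_def e2_def by blast
    then have "f e1 = (-2::real)^card e1" unfolding f_def by simp
    then have "f e1 \<noteq> 0" by simp
    ultimately show ?thesis by blast
  next
    case True
    then have "e2 \<noteq> {}" using ne eadd by (auto simp: f2_add_def)
    then have "e2 \<in> ?G" using e2s g2 by (auto simp: Gamma_hat_def)
    moreover have "\<not> e2 \<subseteq> e1" using \<open>e2 \<noteq> {}\<close> True by blast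
    then have "f e2 = uminus ((-2::real)^card e2)" unfolding f_def by simp
    then have "f e2 \<noteq> 0" by simp
    ultimately show ?thesis by blast
  qed
  then show ?thesis using zero by blast
qed

lemma enum_set_props: "finite S \<Longrightarrow> set (enum_set S) = S \<and> distinct (enum_set S)"
  unfolding enum_set_def by (rule someI_ex) (rule finite_distinct_list)


lemma rank_iff_indep:
  assumes \<Gamma>: "\<Gamma> \<subseteq> Pow {..<n}"
  shows "real_mat_rank (D_matrix n C \<Gamma>) = card (Gamma_hat \<Gamma>) \<longleftrightarrow>
    (\<forall>f. (\<forall>s\<in>dual_code n C. (\<Sum>a\<in>Gamma_hat \<Gamma>. f a * (if a \<subseteq> s then 1 else 0)) = (0::real))
         \<longrightarrow> (\<forall>a\<in>Gamma_hat \<Gamma>. f a = 0))"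
proof -
  let ?D = "dual_code n C"
  let ?G = "Gamma_hat \<Gamma>"
  define rs where "rs = enum_set (?D - {{}})"
  define cs where "cs = enum_set ?G"
  have rs: "set rs = ?D - {{}}" "distinct rs" using enum_set_props[of "?D - {{}}"] dual_finite
    unfolding rs_def by auto
  have cs: "set cs = ?G" "distinct cs" using enum_set_props[OF G_finite[OF \<Gamma>]] unfolding cs_def by auto
  define nr where "nr = length rs"
  define nc where "nc = length cs"
  have nc: "nc = card ?G" using cs distinct_card unfolding nc_def by metis
  define M :: "real mat" where "M = mat nr nc (\<lambda>(i, j). if cs ! j \<subseteq> rs ! i then 1 else 0)"
  have Mdef: "D_matrix n C \<Gamma> = M" unfolding D_matrix_def M_def rs_def cs_def nr_def nc_def Let_def by simp
  have Mc: "M \<in> carrier_mat nr nc" unfolding M_def by simp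
  have rk: "real_mat_rank (D_matrix n C \<Gamma>) = vec_space.rank nr M"
    unfolding Mdef real_mat_rank_def M_def by simp
  have bij: "bij_betw ((!) cs) {..<nc} ?G" using bij_betw_nth[OF cs(2)] cs(1) unfolding nc_def by simp
  have link: "(M *\<^sub>v vec nc (\<lambda>j. f (cs ! j)) = 0\<^sub>v nr) \<longleftrightarrow>
      (\<forall>s\<in>?D. (\<Sum>a\<in>?G. f a * (if a \<subseteq> s then 1 else 0)) = (0::real))" for f
  proof -
    have entry: "(M *\<^sub>v vec nc (\<lambda>j. f (cs ! j))) $ i = (\<Sum>a\<in>?G. f a * (if a \<subseteq> rs ! i then 1 else 0))"
      if "i < nr" for i
    proof -
      have "(M *\<^sub>v vec nc (\<lambda>j. f (cs ! j))) $ i = (\<Sum>j\<in>{0..<nc}. (if cs ! j \<subseteq> rs ! i then 1 else 0) * f (cs ! j))"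
        using that unfolding M_def by (simp add: scalar_prod_def)
      also have "\<dots> = (\<Sum>j\<in>{..<nc}. f (cs ! j) * (if cs ! j \<subseteq> rs ! i then 1 else 0))"
        by (simp add: atLeast0LessThan mult.commute)
      also have "\<dots> = (\<Sum>a\<in>?G. f a * (if a \<subseteq> rs ! i then 1 else 0))"
        by (rule sum.reindex_bij_betw[OF bij])
      finally show ?thesis .
    qed
    have "(M *\<^sub>v vec nc (\<lambda>j. f (cs ! j)) = 0\<^sub>v nr) \<longleftrightarrow>
        (\<forall>i<nr. (M *\<^sub>v vec nc (\<lambda>j. f (cs ! j))) $ i = 0)"
      using Mc by (auto simp: vec_eq_iff)
    also have "\<dots> \<longleftrightarrow> (\<forall>i<nr. (\<Sum>a\<in>?G. f a * (if a \<subseteq> rs ! i then 1 else 0)) = 0)"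
      using entry by simp
    also have "\<dots> \<longleftrightarrow> (\<forall>s\<in>?D - {{}}. (\<Sum>a\<in>?G. f a * (if a \<subseteq> s then 1 else 0)) = 0)"
      using rs(1) all_set_conv_all_nth[of rs] unfolding nr_def by simp
    also have "\<dots> \<longleftrightarrow> (\<forall>s\<in>?D. (\<Sum>a\<in>?G. f a * (if a \<subseteq> s then 1 else 0)) = 0)"
    proof -
      have "(\<Sum>a\<in>?G. f a * (if a \<subseteq> {} then 1 else 0)) = 0"
        by (rule sum.neutral) (auto simp: Gamma_hat_def)
      then show ?thesis by auto
    qed
    finally show ?thesis .
  qed
  have "vec_space.rank nr M = nc \<longleftrightarrow> (\<forall>v\<in>carrier_vec nc. M *\<^sub>v v = 0\<^sub>v nr \<longrightarrow> v = 0\<^sub>v nc)"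
    by (rule rank_full_iff[OF Mc])
  also have "\<dots> \<longleftrightarrow> (\<forall>f. (\<forall>s\<in>?D. (\<Sum>a\<in>?G. f a * (if a \<subseteq> s then 1 else 0)) = (0::real))
         \<longrightarrow> (\<forall>a\<in>?G. f a = 0))"
  proof
    assume K: "\<forall>v\<in>carrier_vec nc. M *\<^sub>v v = 0\<^sub>v nr \<longrightarrow> v = 0\<^sub>v nc"
    show "\<forall>f. (\<forall>s\<in>?D. (\<Sum>a\<in>?G. f a * (if a \<subseteq> s then 1 else 0)) = (0::real)) \<longrightarrow> (\<forall>a\<in>?G. f a = 0)"
    proof (intro allI impI ballI)
      fix f a assume hf: "\<forall>s\<in>?D. (\<Sum>a\<in>?G. f a * (if a \<subseteq> s then 1 else 0)) = (0::real)" and aG: "a \<in> ?G"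
      have "vec nc (\<lambda>j. f (cs ! j)) = 0\<^sub>v nc" using K link[of f] hf by simp
      moreover obtain j where "j < nc" "cs ! j = a" using aG cs(1) unfolding nc_def by (metis in_set_conv_nth)
      ultimately have "vec nc (\<lambda>j. f (cs ! j)) $ j = 0\<^sub>v nc $ j" by simp
      then show "f a = 0" using \<open>j < nc\<close> \<open>cs ! j = a\<close> by simp
    qed
  next
    assume I: "\<forall>f. (\<forall>s\<in>?D. (\<Sum>a\<in>?G. f a * (if a \<subseteq> s then 1 else 0)) = (0::real)) \<longrightarrow> (\<forall>a\<in>?G. f a = 0)"
    show "\<forall>v\<in>carrier_vec nc. M *\<^sub>v v = 0\<^sub>v nr \<longrightarrow> v = 0\<^sub>v nc"
    proof (intro ballI impI)
      fix v :: "real vec" assume vc: "v \<in> carrier_vec nc" and Mv: "M *\<^sub>v v = 0\<^sub>v nr"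
      define f where "f a = v $ (THE j. j < nc \<and> cs ! j = a)" for a
      have th: "(THE j'. j' < nc \<and> cs ! j' = cs ! j) = j" if "j < nc" for j
        using that cs(2) unfolding nc_def by (auto simp: nth_eq_iff_index_eq)
      have vf: "v = vec nc (\<lambda>j. f (cs ! j))"
        using vc th unfolding f_def by (auto simp: vec_eq_iff)
      from Mv have "M *\<^sub>v vec nc (\<lambda>j. f (cs ! j)) = 0\<^sub>v nr" by (simp only: vf[symmetric])
      then have "\<forall>s\<in>?D. (\<Sum>a\<in>?G. f a * (if a \<subseteq> s then 1 else 0)) = (0::real)" using link[of f] by blast
      then have "\<forall>a\<in>?G. f a = 0" using I by blast
      then show "v = 0\<^sub>v nc" using vf cs(1) unfolding nc_def by (auto simp: vec_eq_iff)
    qed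
  qed
  finally show ?thesis using rk nc by simp
qed


theorem theorem3:
  fixes n :: nat and C :: "nat set set" and H :: "nat set list" and \<Gamma> :: "nat set set"
  assumes "linear_code n C"
    and "is_parity_check n C H"
    and "\<Gamma> \<subseteq> Pow {..<n}"
  shows "real_mat_rank (D_matrix n C \<Gamma>) = card (Gamma_hat \<Gamma>) \<longleftrightarrow>
         (\<forall>\<gamma>1\<in>\<Gamma>. \<forall>\<gamma>2\<in>\<Gamma>. \<gamma>1 \<union> \<gamma>2 \<in> DeltaD n H)"
proof -
  let ?Cond = "\<forall>\<gamma>1\<in>\<Gamma>. \<forall>\<gamma>2\<in>\<Gamma>. \<forall>e. e \<noteq> {} \<and> e \<subseteq> \<gamma>1 \<union> \<gamma>2 \<longrightarrow> \<not>(\<forall>s\<in>dual_code n C. even (card (e \<inter> s)))"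
  have R: "(\<forall>\<gamma>1\<in>\<Gamma>. \<forall>\<gamma>2\<in>\<Gamma>. \<gamma>1 \<union> \<gamma>2 \<in> DeltaD n H) \<longleftrightarrow> ?Cond"
  proof -
    have "\<gamma>1 \<union> \<gamma>2 \<in> DeltaD n H \<longleftrightarrow>
      (\<forall>e. e \<noteq> {} \<and> e \<subseteq> \<gamma>1 \<union> \<gamma>2 \<longrightarrow> \<not>(\<forall>s\<in>dual_code n C. even (card (e \<inter> s))))"
      if g: "\<gamma>1 \<in> \<Gamma>" "\<gamma>2 \<in> \<Gamma>" for \<gamma>1 \<gamma>2
    proof -
      have sub: "\<gamma>1 \<union> \<gamma>2 \<subseteq> {..<n}" using g assms(3) by auto
      have "syn H e = replicate (length H) False \<longleftrightarrow> (\<forall>s\<in>dual_code n C. even (card (e \<inter> s)))"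
        if "e \<subseteq> \<gamma>1 \<union> \<gamma>2" for e
      proof -
        have "finite e" using that sub finite_subset by (metis finite_lessThan)
        then show ?thesis by (rule syn_zero_iff[OF assms(2)])
      qed
      then show ?thesis using sub unfolding DeltaD_def by auto
    qed
    then show ?thesis by auto
  qed
  have L: "real_mat_rank (D_matrix n C \<Gamma>) = card (Gamma_hat \<Gamma>) \<longleftrightarrow>
    (\<forall>f. (\<forall>s\<in>dual_code n C. (\<Sum>a\<in>Gamma_hat \<Gamma>. f a * (if a \<subseteq> s then 1 else 0)) = (0::real))
         \<longrightarrow> (\<forall>a\<in>Gamma_hat \<Gamma>. f a = 0))"
    by (rule rank_iff_indep[OF assms(3)])
  have "(\<forall>f. (\<forall>s\<in>dual_code n C. (\<Sum>a\<in>Gamma_hat \<Gamma>. f a * (if a \<subseteq> s then 1 else 0)) = (0::real))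
         \<longrightarrow> (\<forall>a\<in>Gamma_hat \<Gamma>. f a = 0)) \<longleftrightarrow> ?Cond"
  proof
    assume I: "\<forall>f. (\<forall>s\<in>dual_code n C. (\<Sum>a\<in>Gamma_hat \<Gamma>. f a * (if a \<subseteq> s then 1 else 0)) = (0::real))
         \<longrightarrow> (\<forall>a\<in>Gamma_hat \<Gamma>. f a = 0)"
    show ?Cond
    proof (intro ballI allI impI notI)
      fix \<gamma>1 \<gamma>2 e
      assume g: "\<gamma>1 \<in> \<Gamma>" "\<gamma>2 \<in> \<Gamma>" and e: "e \<noteq> {} \<and> e \<subseteq> \<gamma>1 \<union> \<gamma>2"
        and ce: "\<forall>s\<in>dual_code n C. even (card (e \<inter> s))"
      obtain f where "\<forall>s\<in>dual_code n C. (\<Sum>a\<in>Gamma_hat \<Gamma>. f a * (if a \<subseteq> s then 1 else 0)) = (0::real)"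
        "\<exists>a\<in>Gamma_hat \<Gamma>. f a \<noteq> 0"
        using dep_of_not_cond[OF assms(3) g, of e C] e ce by blast
      then show False using I by blast
    qed
  next
    assume c: ?Cond
    show "\<forall>f. (\<forall>s\<in>dual_code n C. (\<Sum>a\<in>Gamma_hat \<Gamma>. f a * (if a \<subseteq> s then 1 else 0)) = (0::real))
         \<longrightarrow> (\<forall>a\<in>Gamma_hat \<Gamma>. f a = 0)"
      using indep_of_cond[OF assms(3) c] by blast
  qed
  then show ?thesis using L R by simp
qed


end
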